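(* Let $C\subseteq\mathbb{R}^n$, $\bar x\in C$, and suppose there exist an open neighborhood $V$ of $\bar x$, a $\mathcal{C}^{(1)}$ map $F:V\to\mathbb{R}^m$ and a closed convex set $D\subseteq\mathbb{R}^m$ with $\mathrm{int}(D)\neq\emptyset$ such that $C\cap V=\{x\in V:F(x)\in D\}$ and the only vector $y\in N_D(F(\bar x))$ with $\nabla F(\bar x)^\top y=0$ is $y=0$. Then $C$ is smoothly approximately convex at $\bar x$. Moreover, for every $\epsilon>0$ there is a neighborhood $W$ of $\bar x$ such that any two distinct points $x,x'\in C\cap W$ are joined by an $\epsilon$-path $\gamma$ satisfying $\gamma((0,1))\subseteq\mathrm{int}(C)$.
   Context: $N_D(z)=\{y:\langle y,d-z\rangle\le0\ \forall d\in D\}$. An $\epsilon$-path from $x$ to $x'$ in $C$ is a map $\gamma:[0,1]\to C$ extending to a $\mathcal{C}^{(1)}$ map on an open neighborhood of $[0,1]$, with $\gamma(0)=x,\gamma(1)=x'$ and $\|\gamma'(t)-(x'-x)\|\le\epsilon\|x'-x\|$ for all $t\in[0,1]$. $C$ is smoothly approximately convex at $\bar x$ if for every $\epsilon>0$ there is a neighborhood $W$ of $\bar x$ such that any $x,x'\in C\cap W$ are joined by an $\epsilon$-path in $C$. *)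

theory Defs
  imports "HOL-Analysis.Analysis"
begin

definition normal_cone :: "'a::real_inner set \<Rightarrow> 'a \<Rightarrow> 'a set" where
  "normal_cone D z = {y. \<forall>d\<in>D. inner y (d - z) \<le> 0}"

text \<open>An epsilon-path from x to x' in C: gamma maps [0,1] into C, is C^1 on an open
  neighbourhood U of [0,1] (the values of gamma outside [0,1] serve as the extension),
  and its derivative stays eps-close to x' - x on [0,1].\<close>
definition eps_path :: "'a::euclidean_space set \<Rightarrow> real \<Rightarrow> 'a \<Rightarrow> 'a \<Rightarrow> (real \<Rightarrow> 'a) \<Rightarrow> bool" where
  "eps_path C eps x x' \<gamma> \<longleftrightarrow>
     \<gamma> ` {0..1} \<subseteq> C \<and> \<gamma> 0 = x \<and> \<gamma> 1 = x' \<and>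
     (\<exists>U \<gamma>'. open U \<and> {0..1} \<subseteq> U \<and>
        (\<forall>t\<in>U. (\<gamma> has_vector_derivative \<gamma>' t) (at t)) \<and> continuous_on U \<gamma>' \<and>
        (\<forall>t\<in>{0..1}. norm (\<gamma>' t - (x' - x)) \<le> eps * norm (x' - x)))"

definition smoothly_approx_convex :: "'a::euclidean_space set \<Rightarrow> 'a \<Rightarrow> bool" where
  "smoothly_approx_convex C xbar \<longleftrightarrow>
     (\<forall>eps>0. \<exists>W. open W \<and> xbar \<in> W \<and>
        (\<forall>x\<in>C \<inter> W. \<forall>x'\<in>C \<inter> W. \<exists>\<gamma>. eps_path C eps x x' \<gamma>))"

end

theory Submission
  imports Defs
begin

lemma robinson:
  fixes A :: "'a::euclidean_space \<Rightarrow> 'b::euclidean_space" and D :: "'b set"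
  assumes lin: "linear A" and cl: "closed D" and cv: "convex D" and ne: "interior D \<noteq> {}"
    and z: "z \<in> D"
    and nc: "\<And>y. y \<in> normal_cone D z \<Longrightarrow> adjoint A y = 0 \<Longrightarrow> y = 0"
  shows "\<exists>u. z + A u \<in> interior D"
proof (rule ccontr)
  assume "\<not> ?thesis"
  hence dis: "interior D \<inter> range (\<lambda>u. z + A u) = {}" by auto
  have cvL: "convex (range (\<lambda>u. z + A u))"
  proof -
    have "range (\<lambda>u. z + A u) = (+) z ` (A ` UNIV)" by auto
    thus ?thesis using convex_translation convex_linear_image[OF lin convex_UNIV] by metis
  qed
  obtain a b where a0: "a \<noteq> 0" and h1: "\<forall>x\<in>interior D. inner a x \<le> b"
    and h2: "\<forall>x\<in>range (\<lambda>u. z + A u). inner a x \<ge> b"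
    using separating_hyperplane_sets[OF convex_interior[OF cv] cvL ne _ dis] by blast
  have orth: "inner a (A u) = 0" for u
  proof (rule ccontr)
    assume nz: "inner a (A u) \<noteq> 0"
    define k where "k = (inner a z - b + 1) / inner a (A u)"
    have "b \<le> inner a (z + A (- k *\<^sub>R u))" using h2 by auto
    also have "\<dots> = inner a z - k * inner a (A u)"
      using lin by (simp add: linear_scale linear_neg inner_add_right inner_diff_right)
    also have "\<dots> = b - 1" using nz by (simp add: k_def)
    finally show False by simp
  qed
  have bz: "b \<le> inner a z" proof -
    have "z + A 0 \<in> range (\<lambda>u. z + A u)" by blast
    thus ?thesis using h2 lin by (metis add.right_neutral linear_0)
  qed
  have "interior D \<subseteq> {x. inner a x \<le> inner a z}" using h1 bz by force
  hence "closure (interior D) \<subseteq> {x. inner a x \<le> inner a z}"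
    by (intro closure_minimal) (auto intro: closed_halfspace_le)
  hence sub: "D \<subseteq> {x. inner a x \<le> inner a z}"
    using convex_closure_interior[OF cv ne] cl by (simp add: closure_closed)
  have "a \<in> normal_cone D z"
    using sub by (auto simp: normal_cone_def inner_diff_right)
  moreover have "adjoint A a = 0"
  proof -
    have "adjoint A a \<bullet> adjoint A a = A (adjoint A a) \<bullet> a" by (rule adjoint_works[OF lin])
    also have "\<dots> = 0" using orth by (simp add: inner_commute)
    finally show ?thesis by simp
  qed
  ultimately show False using nc a0 by blast
qed

lemma norm_comb:
  fixes x y :: "'a::real_normed_vector"
  assumes "0 \<le> a" "0 \<le> b"
  shows "norm (a *\<^sub>R x + b *\<^sub>R y) \<le> a * norm x + b * norm y"
  using norm_triangle_ineq[of "a *\<^sub>R x" "b *\<^sub>R y"] assms by simp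

lemma first_order_bound:
  fixes F :: "'a::euclidean_space \<Rightarrow> 'b::euclidean_space"
  assumes "convex S" "\<And>y. y\<in>S \<Longrightarrow> (F has_derivative blinfun_apply (F' y)) (at y)"
    "\<And>y. y \<in> S \<Longrightarrow> norm (F' y - F' x0) \<le> B" "y\<in>S" "z\<in>S"
  shows "norm (F y - F z - blinfun_apply (F' x0) (y - z)) \<le> B * norm (y - z)"
proof -
  have "norm ((\<lambda>v. F v - F' x0 v) y - (\<lambda>v. F v - F' x0 v) z) \<le> B * norm (y - z)"
  proof (rule differentiable_bound[where f' = "\<lambda>y. blinfun_apply (F' y - F' x0)" and S=S])
    fix v assume v: "v \<in> S"
    have "((\<lambda>v. F v - F' x0 v) has_derivative (\<lambda>h. F' v h - F' x0 h)) (at v)"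
      by (intro has_derivative_diff assms(2) v bounded_linear.has_derivative[OF blinfun.bounded_linear_right] has_derivative_ident)
    thus "((\<lambda>v. F v - F' x0 v) has_derivative blinfun_apply (F' v - F' x0)) (at v within S)"
    proof -
      have "blinfun_apply (F' v - F' x0) = (\<lambda>h. F' v h - F' x0 h)"
        by (rule ext) (simp add: blinfun.diff_left)
      thus ?thesis using \<open>((\<lambda>v. F v - F' x0 v) has_derivative _) _\<close> by (simp add: has_derivative_at_withinI)
    qed
    show "onorm (blinfun_apply (F' v - F' x0)) \<le> B"
      using assms(3)[OF v] by (simp add: norm_blinfun.rep_eq[symmetric])
  qed (use assms in auto)
  then show ?thesis by (simp add: blinfun.diff_right algebra_simps)
qed


theorem proposition3p12:
  fixes C :: "'a::euclidean_space set" and xbar :: 'a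
    and V :: "'a set" and F :: "'a \<Rightarrow> 'b::euclidean_space" and F' :: "'a \<Rightarrow> ('a \<Rightarrow>\<^sub>L 'b)"
    and D :: "'b set"
  assumes "xbar \<in> C"
    and "open V" and "xbar \<in> V"
    and "\<And>x. x \<in> V \<Longrightarrow> (F has_derivative blinfun_apply (F' x)) (at x)"
    and "continuous_on V F'"
    and "closed D" and "convex D" and "interior D \<noteq> {}"
    and "C \<inter> V = {x \<in> V. F x \<in> D}"
    and "\<And>y. y \<in> normal_cone D (F xbar) \<Longrightarrow> adjoint (blinfun_apply (F' xbar)) y = 0 \<Longrightarrow> y = 0"
  shows "smoothly_approx_convex C xbar \<and>
    (\<forall>eps>0. \<exists>W. open W \<and> xbar \<in> W \<and>
       (\<forall>x\<in>C \<inter> W. \<forall>x'\<in>C \<inter> W. x \<noteq> x' \<longrightarrow>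
          (\<exists>\<gamma>. eps_path C eps x x' \<gamma> \<and> \<gamma> ` {0<..<1} \<subseteq> interior C)))"
proof -
  let ?A = "blinfun_apply (F' xbar)"
  have lin: "linear ?A" by (simp add: blinfun.bounded_linear_right bounded_linear.linear)
  have FxD: "F xbar \<in> D" using assms(1,3,9) by blast
  obtain u where u: "F xbar + ?A u \<in> interior D"
    using robinson[OF lin assms(6,7,8) FxD assms(10)] by blast
  define w where "w = F xbar + ?A u"
  obtain r where r: "r > 0" "ball w r \<subseteq> interior D"
    using u open_interior openE unfolding w_def by metis
  have contF: "continuous_on V F"
    by (rule has_derivative_continuous_on) (use assms(4) has_derivative_at_withinI in blast)
  define Opn where "Opn = V \<inter> F -` interior D"
  have "open Opn" unfolding Opn_def by (rule continuous_open_preimage[OF contF assms(2) open_interior])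
  moreover have "Opn \<subseteq> C" using assms(9) interior_subset unfolding Opn_def by blast
  ultimately have Oint: "Opn \<subseteq> interior C" by (simp add: interior_maximal)
  have main: "\<exists>W. open W \<and> xbar \<in> W \<and> (\<forall>x\<in>C\<inter>W. \<forall>x'\<in>C\<inter>W. \<exists>\<gamma>. eps_path C eps x x' \<gamma> \<and>
      (x \<noteq> x' \<longrightarrow> \<gamma> ` {0<..<1} \<subseteq> interior C))" if eps: "eps > 0" for eps
  proof -
    define e' where "e' = min eps 1"
    define c where "c = e' / (norm u + 1)"
    define om where "om = c * r / 16"
    have e': "0 < e'" "e' \<le> 1" "e' \<le> eps" using eps by (auto simp: e'_def)
    have c: "0 < c" "c \<le> 1" "c * norm u \<le> e'"
    proof -
      have n: "norm u + 1 > 0" "norm u \<le> norm u + 1" by (auto intro: add_nonneg_pos)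
      show "0 < c" using e' n by (simp add: c_def)
      have "e' \<le> norm u + 1" using e' norm_ge_zero[of u] by linarith
      thus "c \<le> 1" using n unfolding c_def by (simp add: divide_le_eq)
      have "c * norm u = e' * (norm u / (norm u + 1))" by (simp add: c_def)
      also have "\<dots> \<le> e' * 1" using e' n by (intro mult_left_mono) (auto simp: divide_le_eq)
      finally show "c * norm u \<le> e'" by simp
    qed
    have om: "om > 0" using c r by (simp add: om_def)
    have "isCont F' xbar" using assms(2,3,5) continuous_on_eq_continuous_at by blast
    then obtain d1 where d1: "d1 > 0" "\<And>y. dist y xbar < d1 \<Longrightarrow> norm (F' y - F' xbar) \<le> om"
      using om unfolding continuous_at_eps_delta dist_norm by (metis less_imp_le)
    have "isCont F xbar" using assms(2,3) contF continuous_on_eq_continuous_at by blast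
    then obtain d2 where d2: "d2 > 0" "\<And>y. dist y xbar < d2 \<Longrightarrow> norm (F y - F xbar) < r/2"
      using r unfolding continuous_at_eps_delta dist_norm by (metis half_gt_zero)
    obtain d3 where d3: "d3 > 0" "ball xbar d3 \<subseteq> V" using assms(2,3) openE by blast
    define d0 where "d0 = min d1 (min d2 d3)"
    define \<delta> where "\<delta> = min (d0/5) (1/2)"
    have d0: "d0 > 0" using d1 d2 d3 by (simp add: d0_def)
    have \<delta>: "\<delta> > 0" "5 * \<delta> \<le> d0" "\<delta> \<le> 1/2" using d0 by (auto simp: \<delta>_def)
    define S where "S = ball xbar d0"
    have SV: "S \<subseteq> V" using d3 by (auto simp: S_def d0_def)
    have bnd: "norm (F y - F z - ?A (y - z)) \<le> om * norm (y - z)" if "y \<in> S" "z \<in> S" for y z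
    proof (rule first_order_bound[where S=S])
      show "convex S" by (simp add: S_def)
      show "(F has_derivative blinfun_apply (F' v)) (at v)" if "v \<in> S" for v
        using that SV assms(4) by blast
      show "norm (F' v - F' xbar) \<le> om" if "v \<in> S" for v
        using that d1 by (auto simp: S_def d0_def dist_commute)
    qed (use that in auto)
    have Fclose: "norm (F y - F xbar) < r/2" if "y \<in> S" for y
      using that d2 by (auto simp: S_def d0_def dist_commute)
    show ?thesis
    proof (intro exI[of _ "ball xbar \<delta>"] conjI ballI)
      show "open (ball xbar \<delta>)" by simp
      show "xbar \<in> ball xbar \<delta>" using \<delta> by simp
      fix x x' assume x: "x \<in> C \<inter> ball xbar \<delta>" and x': "x' \<in> C \<inter> ball xbar \<delta>"
      show "\<exists>\<gamma>. eps_path C eps x x' \<gamma> \<and> (x \<noteq> x' \<longrightarrow> \<gamma> ` {0<..<1} \<subseteq> interior C)"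
      proof (cases "x = x'")
        case True
        have "eps_path C eps x x' (\<lambda>t. x)"
        proof -
          have "x \<in> C" using x by blast
          thus ?thesis unfolding eps_path_def
            by (intro conjI exI[of _ UNIV] exI[of _ "\<lambda>t. 0"]) (auto simp: True)
        qed
        thus ?thesis using True by blast
      next
        case False
        define h where "h = norm (x' - x)"
        have h0: "h > 0" using False by (simp add: h_def)
        have xS: "x \<in> S" and x'S: "x' \<in> S" and xV: "x \<in> V" and x'V: "x' \<in> V"
          using x x' \<delta> SV by (auto simp: S_def)
        have "h \<le> dist x xbar + dist x' xbar"
          unfolding h_def using dist_triangle[of x' x xbar] by (simp add: dist_norm dist_commute norm_minus_commute)
        hence h2: "h < 2 * \<delta>" using x x' by (auto simp: dist_commute)
        have h1: "h \<le> 1" using h2 \<delta> by linarith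
        define \<gamma> where "\<gamma> = (\<lambda>t::real. x + t *\<^sub>R (x' - x) + (c*h*t*(1-t)) *\<^sub>R u)"
        define \<gamma>' where "\<gamma>' = (\<lambda>t::real. (x' - x) + (c*h*(1-2*t)) *\<^sub>R u)"
        have der: "(\<gamma> has_vector_derivative \<gamma>' t) (at t)" for t
          unfolding \<gamma>_def \<gamma>'_def
          by (auto intro!: derivative_eq_intros simp: algebra_simps)
        have key: "\<gamma> t \<in> Opn" if t: "0 < t" "t < 1" for t
        proof -
          define s where "s = c*h*t*(1-t)"
          have s0: "0 < s" using c h0 t by (simp add: s_def)
          have tt: "t*(1-t) \<le> 1" using t by (intro mult_le_one) auto
          have s1: "s \<le> 1" unfolding s_def using c h1 h0 tt t
            by (simp add: mult.assoc mult_le_one)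
          have "s * norm u = (c * norm u) * (h*t*(1-t))" by (simp add: s_def algebra_simps)
          also have "\<dots> \<le> 1 * (h*t*(1-t))" using c e' h0 t by (intro mult_right_mono) auto
          finally have su: "s * norm u \<le> h*t*(1-t)" by simp
          define y where "y = \<gamma> t"
          have y_alt: "y = x + t *\<^sub>R (x' - x) + s *\<^sub>R u" by (simp add: y_def \<gamma>_def s_def)
          have "y - x = t *\<^sub>R (x' - x) + s *\<^sub>R u" by (simp add: y_alt)
          hence "norm (y - x) \<le> norm (t *\<^sub>R (x' - x)) + norm (s *\<^sub>R u)"
            by (simp only:) (rule norm_triangle_ineq)
          also have "\<dots> = t*h + s * norm u" using t s0 by (simp add: h_def)
          also have "\<dots> \<le> 2*t*h"
          proof -
            have "h*t*(1-t) \<le> h*t" using t h0 by (intro mult_left_le) auto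
            thus ?thesis using su by (simp add: mult.commute)
          qed
          finally have yx: "norm (y - x) \<le> 2*t*h" .
          have "y - x' = (1-t) *\<^sub>R (x - x') + s *\<^sub>R u" unfolding y_alt by (simp add: algebra_simps)
          hence "norm (y - x') \<le> norm ((1-t) *\<^sub>R (x - x')) + norm (s *\<^sub>R u)"
            by (simp only:) (rule norm_triangle_ineq)
          also have "\<dots> = (1-t)*h + s * norm u" using t s0 by (simp add: h_def norm_minus_commute)
          also have "\<dots> \<le> 2*(1-t)*h"
          proof -
            have "h*(1-t)*t \<le> h*(1-t)" using t h0 by (intro mult_left_le) auto
            thus ?thesis using su by (simp add: algebra_simps)
          qed
          finally have yx': "norm (y - x') \<le> 2*(1-t)*h" .
          have "norm (y - xbar) \<le> norm (y - x) + norm (x - xbar)" using norm_triangle_ineq[of "y - x" "x - xbar"] by simp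
          also have "\<dots> < 2*t*h + \<delta>" using yx x by (simp add: dist_norm norm_minus_commute)
          also have "\<dots> \<le> 5 * \<delta>"
          proof -
            have "t*h \<le> h" using t h0 by (intro mult_left_le_one_le) auto
            thus ?thesis using h2 by linarith
          qed
          finally have yS: "y \<in> S" using \<delta> by (simp add: S_def dist_norm norm_minus_commute)
          define e1 where "e1 = F y - F x - ?A (y - x)"
          define e2 where "e2 = F y - F x' - ?A (y - x')"
          have ne1: "norm e1 \<le> om * (2*t*h)" unfolding e1_def
            using bnd[OF yS xS] mult_left_mono[OF yx less_imp_le[OF om]] by linarith
          have ne2: "norm e2 \<le> om * (2*(1-t)*h)" unfolding e2_def
            using bnd[OF yS x'S] mult_left_mono[OF yx' less_imp_le[OF om]] by linarith
          have FxD': "F x \<in> D" "F x' \<in> D" using x x' xV x'V assms(9) by blast+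
          define p where "p = (1-t) *\<^sub>R F x + t *\<^sub>R F x'"
          have pD: "p \<in> D" unfolding p_def using t FxD' by (intro convexD[OF assms(7)]) auto
          define E where "E = (1-t) *\<^sub>R e1 + t *\<^sub>R e2"
          have "norm E \<le> (1-t) * norm e1 + t * norm e2"
            unfolding E_def using t by (intro norm_comb) auto
          also have "\<dots> \<le> (1-t) * (om * (2*t*h)) + t * (om * (2*(1-t)*h))"
            using t ne1 ne2 by (intro add_mono mult_left_mono) auto
          also have "\<dots> = s * r / 4" unfolding s_def om_def by (simp add: field_simps)
          finally have nE: "norm E \<le> s * r / 4" .
          have Ay: "?A y = ?A x + t *\<^sub>R ?A x' - t *\<^sub>R ?A x + s *\<^sub>R ?A u"
            unfolding y_alt by (simp add: blinfun.add_right blinfun.diff_right blinfun.scaleR_right algebra_simps)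
          have Eeq: "E = F y - p - s *\<^sub>R ?A u"
            unfolding E_def e1_def e2_def p_def by (simp add: blinfun.diff_right Ay algebra_simps)
          define q where "q = w + (p - F xbar) + (1/s) *\<^sub>R E"
          have "p - F xbar = (1-t) *\<^sub>R (F x - F xbar) + t *\<^sub>R (F x' - F xbar)"
            by (simp add: p_def algebra_simps)
          hence "norm (p - F xbar) \<le> (1-t) * norm (F x - F xbar) + t * norm (F x' - F xbar)"
            using t by (simp only:) (intro norm_comb, auto)
          also have "\<dots> < (1-t) * (r/2) + t * (r/2)"
            using t Fclose[OF xS] Fclose[OF x'S] by (intro add_le_less_mono mult_left_mono mult_strict_left_mono) auto
          also have "\<dots> = r/2" by (simp add: field_simps)
          finally have np: "norm (p - F xbar) < r/2" .
          have "norm ((1/s) *\<^sub>R E) = norm E / s" using s0 by simp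
          also have "\<dots> \<le> r/4" using nE s0 by (simp add: divide_le_eq mult.commute)
          finally have nq: "norm ((1/s) *\<^sub>R E) \<le> r/4" .
          have "norm (q - w) \<le> norm (p - F xbar) + norm ((1/s) *\<^sub>R E)"
          proof -
            have "q - w = (p - F xbar) + (1/s) *\<^sub>R E" by (simp add: q_def)
            thus ?thesis by (simp only:) (rule norm_triangle_ineq)
          qed
          hence "dist w q < r" using np nq r by (simp only: dist_norm norm_minus_commute[of w q])
          hence qint: "q \<in> interior D" using r by auto
          have "p - s *\<^sub>R (p - q) = F y"
            using s0 by (simp add: q_def Eeq w_def algebra_simps)
          hence "F y \<in> interior D"
            using mem_interior_convex_shrink[OF assms(7) qint pD s0 s1] by simp
          thus ?thesis using yS SV unfolding Opn_def y_def by auto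
        qed
        have "eps_path C eps x x' \<gamma>"
          unfolding eps_path_def
        proof (intro conjI exI[of _ UNIV] exI[of _ \<gamma>'])
          show "\<gamma> ` {0..1} \<subseteq> C"
          proof
            fix y assume "y \<in> \<gamma> ` {0..1}"
            then obtain t where t: "t \<in> {0..1}" "y = \<gamma> t" by blast
            show "y \<in> C"
            proof (cases "t = 0 \<or> t = 1")
              case True thus ?thesis using t x x' by (auto simp: \<gamma>_def)
            next
              case False
              hence "0 < t" "t < 1" using t by auto
              hence "\<gamma> t \<in> Opn" by (rule key)
              thus ?thesis using t(2) \<open>Opn \<subseteq> C\<close> by blast
            qed
          qed
          show "\<gamma> 0 = x" "\<gamma> 1 = x'" by (auto simp: \<gamma>_def)
          show "continuous_on UNIV \<gamma>'" unfolding \<gamma>'_def by (intro continuous_intros)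
          show "\<forall>t\<in>UNIV. (\<gamma> has_vector_derivative \<gamma>' t) (at t)" using der by blast
          show "\<forall>t\<in>{0..1}. norm (\<gamma>' t - (x' - x)) \<le> eps * norm (x' - x)"
          proof
            fix t :: real assume t: "t \<in> {0..1}"
            have "norm (\<gamma>' t - (x' - x)) = c * h * \<bar>1-2*t\<bar> * norm u"
              using c h0 by (simp add: \<gamma>'_def abs_mult)
            also have "\<dots> \<le> c * h * 1 * norm u"
              using t c h0 by (intro mult_right_mono mult_left_mono) auto
            also have "\<dots> = (c * norm u) * h" by simp
            also have "\<dots> \<le> eps * h" using c e' h0 by (intro mult_right_mono) auto
            finally show "norm (\<gamma>' t - (x' - x)) \<le> eps * norm (x' - x)" by (simp add: h_def)
          qed
        qed simp_all
        moreover have "\<gamma> ` {0<..<1} \<subseteq> interior C" using key Oint by auto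
        ultimately show ?thesis by blast
      qed
    qed
  qed
  show ?thesis
    unfolding smoothly_approx_convex_def using main by meson
qed

end
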